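(* Let $S\ni h$ be a $2$-admissible polarized lattice of degree $h^2=8$, $\Delta$ a Weyl chamber for $\operatorname{rt}(S,h)$, $\bar P$ the corresponding closed fundamental polyhedron, and $\Gamma=\operatorname{Fn}_\Delta(S,h)$. Then the star $\operatorname{Star}(e)$ of $e$ is as follows: (1) if $e\in\Gamma$ is a line, $\operatorname{Star}(e)\cong\mathbf{A}_2\oplus a\mathbf{A}_1$ with $a\le3$, or $\operatorname{Star}(e)\cong a\mathbf{A}_1$ with $a\le8$; (2) if $e\in\Gamma$ is a line and $S\ni h$ is $3$-admissible, $\operatorname{Star}(e)\cong a\mathbf{A}_1$ with $a\le7$; (3) if $e\in\mathfrak{b}(\Delta)$ is an exceptional divisor, $\operatorname{Star}(e)\cong a\mathbf{A}_1$ with $a\le5$; (4) if $e\in\bar P$ is a $3$-isotropic vector, $\operatorname{Star}(e)\cong\mathbf{A}_2$ or $\operatorname{Star}(e)\cong a\mathbf{A}_1$ with $a\le9$.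
   Context: All lattices even; $(S,h)$ polarized: $S$ hyperbolic, $h^2>0$. $\operatorname{root}_n(S,h)=\{r: r^2=-2,\ r\cdot h=n\}$, $\operatorname{rt}(S,h)$ spanned by $\operatorname{root}_0(S,h)$. A Weyl chamber $\Delta$ has positive roots $P_\Delta$ and simple roots $\mathfrak{b}(\Delta)$ (exceptional divisors). $\bar P=\{v\in S\otimes\mathbb{R}: v^2\ge0,\ v\cdot h\ge0,\ v\cdot r\ge0 \text{ for } r\in P_\Delta \text{ and all roots } r \text{ with } r\cdot h>0\}$. The Fano graph $\Gamma=\operatorname{Fn}_\Delta(S,h)=\{l\in\operatorname{root}_1(S,h): l\cdot e\ge0\ \forall e\in\mathfrak{b}(\Delta)\}$ (elements: lines), with edges of multiplicity $l_1\cdot l_2$. $w$ is $m$-isotropic if $w^2=0$, $w\cdot h=m$; $2$-admissible: no $1$- or $2$-isotropic vector; $3$-admissible: in addition no $3$-isotropic vector. $\operatorname{Star}(e)=\{l\in\Gamma: l\cdot e=1\}$ as an induced subgraph of $\Gamma$. $a\mathbf{A}_1$ denotes the graph of $a$ isolated vertices, and $\mathbf{A}_2\oplus a\mathbf{A}_1$ the disjoint union of a single edge with $a$ isolated vertices. *)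

theory Defs
  imports "HOL-Analysis.Analysis"
begin

text \<open>An even lattice of rank CARD('n) is modelled as the standard lattice Z^n inside R^n
  together with an integral Gram matrix G. Real vectors model S tensor R.\<close>

definition bil :: "int^'n^'n \<Rightarrow> real^'n \<Rightarrow> real^'n \<Rightarrow> real" where
  "bil G x y = (\<Sum>i\<in>UNIV. \<Sum>j\<in>UNIV. x$i * real_of_int (G$i$j) * y$j)"

definition sq :: "int^'n^'n \<Rightarrow> real^'n \<Rightarrow> real" where
  "sq G x = bil G x x"

definition lat :: "(real^'n) set" where
  "lat = {v. \<forall>i. v$i \<in> \<int>}"

definition even_lattice :: "int^'n^'n \<Rightarrow> bool" where
  "even_lattice G \<longleftrightarrow> (\<forall>i j. G$i$j = G$j$i) \<and> (\<forall>i. even (G$i$i))"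

text \<open>Hyperbolic: nondegenerate of signature (1, rank-1), i.e. there is a positive vector
  and the orthogonal complement of every positive vector is negative definite.\<close>
definition hyperbolic :: "int^'n^'n \<Rightarrow> bool" where
  "hyperbolic G \<longleftrightarrow> (\<exists>v. sq G v > 0) \<and>
     (\<forall>u v. sq G u > 0 \<longrightarrow> bil G u v = 0 \<longrightarrow> v \<noteq> 0 \<longrightarrow> sq G v < 0)"

definition polarized :: "int^'n^'n \<Rightarrow> real^'n \<Rightarrow> bool" where
  "polarized G h \<longleftrightarrow> even_lattice G \<and> hyperbolic G \<and> h \<in> lat \<and> sq G h > 0"

definition isotropic :: "int^'n^'n \<Rightarrow> real^'n \<Rightarrow> int \<Rightarrow> real^'n \<Rightarrow> bool" where
  "isotropic G h m w \<longleftrightarrow> w \<in> lat \<and> sq G w = 0 \<and> bil G w h = of_int m"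

definition admissible2 :: "int^'n^'n \<Rightarrow> real^'n \<Rightarrow> bool" where
  "admissible2 G h \<longleftrightarrow> (\<nexists>w. isotropic G h 1 w) \<and> (\<nexists>w. isotropic G h 2 w)"

definition admissible3 :: "int^'n^'n \<Rightarrow> real^'n \<Rightarrow> bool" where
  "admissible3 G h \<longleftrightarrow> admissible2 G h \<and> (\<nexists>w. isotropic G h 3 w)"

definition roots :: "int^'n^'n \<Rightarrow> real^'n \<Rightarrow> int \<Rightarrow> (real^'n) set" where
  "roots G h n = {r \<in> lat. sq G r = -2 \<and> bil G r h = of_int n}"

text \<open>A Weyl chamber of rt(S,h) is determined by a vector xi (in S tensor R) not orthogonal
  to any root in root_0; the chamber is the one containing the projection of xi.\<close>
definition weyl_vector :: "int^'n^'n \<Rightarrow> real^'n \<Rightarrow> real^'n \<Rightarrow> bool" where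
  "weyl_vector G h \<xi> \<longleftrightarrow> (\<forall>r\<in>roots G h 0. bil G r \<xi> \<noteq> 0)"

definition pos_roots :: "int^'n^'n \<Rightarrow> real^'n \<Rightarrow> real^'n \<Rightarrow> (real^'n) set" where
  "pos_roots G h \<xi> = {r \<in> roots G h 0. bil G r \<xi> > 0}"

definition simple_roots :: "int^'n^'n \<Rightarrow> real^'n \<Rightarrow> real^'n \<Rightarrow> (real^'n) set" where
  "simple_roots G h \<xi> = {r \<in> pos_roots G h \<xi>.
      \<not> (\<exists>s\<in>pos_roots G h \<xi>. \<exists>t\<in>pos_roots G h \<xi>. r = s + t)}"

definition Pbar :: "int^'n^'n \<Rightarrow> real^'n \<Rightarrow> real^'n \<Rightarrow> (real^'n) set" where
  "Pbar G h \<xi> = {v. sq G v \<ge> 0 \<and> bil G v h \<ge> 0 \<and>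
      (\<forall>r\<in>pos_roots G h \<xi>. bil G v r \<ge> 0) \<and>
      (\<forall>r. r \<in> lat \<and> sq G r = -2 \<and> bil G r h > 0 \<longrightarrow> bil G v r \<ge> 0)}"

definition fano :: "int^'n^'n \<Rightarrow> real^'n \<Rightarrow> real^'n \<Rightarrow> (real^'n) set" where
  "fano G h \<xi> = {l \<in> roots G h 1. \<forall>e\<in>simple_roots G h \<xi>. bil G l e \<ge> 0}"

definition star :: "int^'n^'n \<Rightarrow> real^'n \<Rightarrow> real^'n \<Rightarrow> real^'n \<Rightarrow> (real^'n) set" where
  "star G h \<xi> e = {l \<in> fano G h \<xi>. bil G l e = 1}"

text \<open>Graphs with edge multiplicities: vertex set V and multiplicity w on distinct vertices.
  Isomorphism: bijection preserving multiplicities.\<close>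
definition graph_iso :: "'a set \<Rightarrow> ('a \<Rightarrow> 'a \<Rightarrow> real) \<Rightarrow> 'b set \<Rightarrow> ('b \<Rightarrow> 'b \<Rightarrow> real) \<Rightarrow> bool" where
  "graph_iso V w W w' \<longleftrightarrow> (\<exists>f. bij_betw f V W \<and>
      (\<forall>x\<in>V. \<forall>y\<in>V. x \<noteq> y \<longrightarrow> w x y = w' (f x) (f y)))"

text \<open>a A_1: a isolated vertices.\<close>
definition aA1_mult :: "nat \<Rightarrow> nat \<Rightarrow> real" where
  "aA1_mult i j = 0"

text \<open>A_2 + a A_1: vertices 0..a+1, single simple edge between 0 and 1.\<close>
definition A2aA1_mult :: "nat \<Rightarrow> nat \<Rightarrow> real" where
  "A2aA1_mult i j = (if {i, j} = {0, 1} then 1 else 0)"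

definition star_iso_aA1 :: "int^'n^'n \<Rightarrow> real^'n \<Rightarrow> real^'n \<Rightarrow> real^'n \<Rightarrow> nat \<Rightarrow> bool" where
  "star_iso_aA1 G h \<xi> e a \<longleftrightarrow> graph_iso (star G h \<xi> e) (bil G) {0..<a} aA1_mult"

definition star_iso_A2aA1 :: "int^'n^'n \<Rightarrow> real^'n \<Rightarrow> real^'n \<Rightarrow> real^'n \<Rightarrow> nat \<Rightarrow> bool" where
  "star_iso_A2aA1 G h \<xi> e a \<longleftrightarrow> graph_iso (star G h \<xi> e) (bil G) {0..<a+2} A2aA1_mult"

end

theory Submission
  imports Defs
begin


lemma bil_add_left: "bil G (x + y) z = bil G x z + bil G y z"
  by (simp add: bil_def distrib_right sum.distrib)
lemma bil_add_right: "bil G z (x + y) = bil G z x + bil G z y"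
  by (simp add: bil_def distrib_left sum.distrib)
lemma bil_scale_left: "bil G (c *\<^sub>R x) z = c * bil G x z"
  by (simp add: bil_def sum_distrib_left mult.assoc)
lemma bil_scale_right: "bil G z (c *\<^sub>R x) = c * bil G z x"
  by (simp add: bil_def sum_distrib_left mult.assoc mult.left_commute)
lemma bil_minus_left: "bil G (- x) z = - bil G x z"
  by (simp add: bil_def sum_negf)
lemma bil_minus_right: "bil G z (- x) = - bil G z x"
  by (simp add: bil_def sum_negf)
lemma bil_diff_left: "bil G (x - y) z = bil G x z - bil G y z"
  by (simp add: bil_def left_diff_distrib sum_subtractf)
lemma bil_diff_right: "bil G z (x - y) = bil G z x - bil G z y"
  by (simp add: bil_def right_diff_distrib sum_subtractf)
lemma bil_zero_left[simp]: "bil G 0 z = 0" by (simp add: bil_def)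
lemma bil_zero_right[simp]: "bil G z 0 = 0" by (simp add: bil_def)
lemma bil_sum_left: "bil G (sum f A) z = (\<Sum>a\<in>A. bil G (f a) z)"
  by (induction A rule: infinite_finite_induct) (auto simp: bil_add_left)
lemma bil_sum_right: "bil G z (sum f A) = (\<Sum>a\<in>A. bil G z (f a))"
  by (induction A rule: infinite_finite_induct) (auto simp: bil_add_right)

lemmas bil_lin = bil_add_left bil_add_right bil_scale_left bil_scale_right
  bil_minus_left bil_minus_right bil_diff_left bil_diff_right

lemma bil_sym: assumes "even_lattice G" shows "bil G x y = bil G y x"
proof -
  have "bil G x y = (\<Sum>j\<in>UNIV. \<Sum>i\<in>UNIV. x$i * real_of_int (G$i$j) * y$j)"
    unfolding bil_def by (rule sum.swap)
  also have "\<dots> = bil G y x" unfolding bil_def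
    using assms unfolding even_lattice_def by (simp add: mult.commute mult.left_commute)
  finally show ?thesis .
qed

lemma lat_add: "x \<in> lat \<Longrightarrow> y \<in> lat \<Longrightarrow> x + y \<in> lat" by (auto simp: lat_def)
lemma lat_diff: "x \<in> lat \<Longrightarrow> y \<in> lat \<Longrightarrow> x - y \<in> lat" by (auto simp: lat_def)
lemma lat_minus: "x \<in> lat \<Longrightarrow> - x \<in> lat" by (auto simp: lat_def)
lemma lat_zero: "0 \<in> lat" by (auto simp: lat_def)
lemma lat_scale: "c \<in> \<int> \<Longrightarrow> x \<in> lat \<Longrightarrow> c *\<^sub>R x \<in> lat" by (auto simp: lat_def)
lemma lat_sum: "(\<And>a. a \<in> A \<Longrightarrow> f a \<in> lat) \<Longrightarrow> sum f A \<in> lat"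
  by (induction A rule: infinite_finite_induct) (auto simp: lat_zero lat_add)

lemma bil_Ints: "x \<in> lat \<Longrightarrow> y \<in> lat \<Longrightarrow> bil G x y \<in> \<int>"
  unfolding bil_def lat_def by (auto intro!: Ints_sum Ints_mult)

lemma lat_finite: "finite {v::real^'n. v \<in> lat \<and> norm v \<le> R}"
proof -
  define N where "N = ceiling R"
  have "{v::real^'n. v \<in> lat \<and> norm v \<le> R} \<subseteq>
      (\<lambda>f. \<chi> i. real_of_int (f i)) ` (\<Pi>\<^sub>E i \<in> UNIV. {-N..N})"
  proof
    fix v :: "real^'n" assume v: "v \<in> {v. v \<in> lat \<and> norm v \<le> R}"
    have "\<forall>i. v$i = real_of_int (floor (v$i))"
      using v by (auto simp: lat_def elim!: Ints_cases)
    hence "v = (\<chi> i. real_of_int ((\<lambda>i. floor (v$i)) i))" by (simp add: vec_eq_iff)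
    moreover have "(\<lambda>i. floor (v$i)) \<in> (\<Pi>\<^sub>E i \<in> UNIV. {-N..N})"
    proof -
      have "\<And>i. \<bar>v$i\<bar> \<le> R" using v component_le_norm_cart order_trans by blast
      hence "\<And>i. -N \<le> floor (v$i) \<and> floor (v$i) \<le> N" unfolding N_def
        by (metis abs_le_D1 abs_le_D2 ceiling_correct floor_le_ceiling floor_mono le_floor_iff
             of_int_minus minus_le_iff order_trans)
      thus ?thesis by (auto simp: PiE_def extensional_def)
    qed
    ultimately show "v \<in> (\<lambda>f. \<chi> i. real_of_int (f i)) ` (\<Pi>\<^sub>E i \<in> UNIV. {-N..N})"
      by (intro image_eqI[where f="\<lambda>f. \<chi> i. real_of_int (f i)" and x="\<lambda>i. floor (v$i)"]) simp_all
  qed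
  moreover have "finite (\<Pi>\<^sub>E i \<in> (UNIV::'n set). {-N..N})" by (rule finite_PiE) auto
  ultimately show ?thesis by (meson finite_imageI finite_subset)
qed



definition Qf :: "int^'n^'n \<Rightarrow> real^'n \<Rightarrow> real^'n \<Rightarrow> real" where
  "Qf G h v = 2 * (bil G v h)^2 / sq G h - sq G v"

lemma Q_pos:
  assumes pol: "polarized G h" and v: "v \<noteq> 0"
  shows "Qf G h v > 0"
proof -
  have ev: "even_lattice G" and hyp: "hyperbolic G" and s: "sq G h > 0"
    using pol by (auto simp: polarized_def)
  define s where "s = sq G h"
  define \<alpha> where "\<alpha> = bil G v h / s"
  define u where "u = v - \<alpha> *\<^sub>R h"
  have s0: "s > 0" using s s_def by simp
  have hh: "bil G h h = s" by (simp add: s_def sq_def)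
  have uh: "bil G u h = 0" unfolding u_def \<alpha>_def
    using s0 by (simp add: bil_lin hh)
  have hu: "bil G h u = 0" using uh bil_sym[OF ev] by metis
  have vu: "v = u + \<alpha> *\<^sub>R h" by (simp add: u_def)
  have sqv: "sq G v = sq G u + \<alpha>^2 * s"
    unfolding vu sq_def s_def using uh hu by (simp add: bil_lin sq_def power2_eq_square)
  have bvh: "bil G v h = \<alpha> * s" unfolding \<alpha>_def using s0 by simp
  have Q: "Qf G h v = \<alpha>^2 * s - sq G u"
    unfolding Qf_def s_def[symmetric] sqv bvh using s0 by (simp add: power2_eq_square)
  show ?thesis
  proof (cases "u = 0")
    case True
    then have "\<alpha> \<noteq> 0" using v vu by auto
    then show ?thesis using Q True s0 by (simp add: sq_def)
  next
    case False
    then have "sq G u < 0" using hyp s hu unfolding hyperbolic_def by blast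
    then show ?thesis using Q s0 by (smt (verit) mult_nonneg_nonneg zero_le_power2)
  qed
qed

lemma Q_scale: "Qf G h (c *\<^sub>R v) = c^2 * Qf G h v"
  by (simp add: Qf_def sq_def bil_lin power2_eq_square field_simps)

lemma bil_cont: "continuous_on UNIV (\<lambda>v. bil G (f v) (g v))" if "continuous_on UNIV f" "continuous_on UNIV g"
  unfolding bil_def
  by (intro continuous_on_sum continuous_on_mult continuous_on_const continuous_on_component that)

lemma Q_cont: "continuous_on UNIV (Qf G h)"
proof -
  have e: "Qf G h = (\<lambda>v. (2 / sq G h) * (bil G v h)^2 - bil G v v)"
    by (auto simp: Qf_def sq_def)
  show ?thesis unfolding e
    by (intro continuous_on_diff continuous_on_mult continuous_on_const continuous_on_power
        bil_cont continuous_on_id)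
qed

lemma Q_bound:
  fixes G :: "int^'n^'n" and h :: "real^'n"
  assumes pol: "polarized G h"
  shows "\<exists>m>0. \<forall>v. Qf G h v \<ge> m * (norm v)^2"
proof -
  have ne: "sphere (0::real^'n) 1 \<noteq> {}"
    using vector_choose_size[of 1] by auto
  obtain x where x: "x \<in> sphere (0::real^'n) 1" and xm: "\<forall>y\<in>sphere 0 1. Qf G h x \<le> Qf G h y"
    using continuous_attains_inf[OF compact_sphere ne continuous_on_subset[OF Q_cont subset_UNIV]]
    by blast
  have x0: "x \<noteq> 0" using x by auto
  have m: "Qf G h x > 0" using Q_pos[OF pol x0] .
  have "\<forall>v. Qf G h v \<ge> Qf G h x * (norm v)^2"
  proof
    fix v :: "real^'n"
    show "Qf G h v \<ge> Qf G h x * (norm v)^2"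
    proof (cases "v = 0")
      case True then show ?thesis by (simp add: Qf_def sq_def)
    next
      case False
      define w where "w = (1 / norm v) *\<^sub>R v"
      have "w \<in> sphere 0 1" using False by (simp add: w_def)
      hence "Qf G h x \<le> Qf G h w" using xm by blast
      moreover have "v = norm v *\<^sub>R w" using False by (simp add: w_def)
      hence "Qf G h v = (norm v)^2 * Qf G h w" by (metis Q_scale)
      ultimately show ?thesis by (simp add: mult.commute mult_right_mono)
    qed
  qed
  then show ?thesis using m by blast
qed

lemma roots_finite:
  assumes pol: "polarized G h"
  shows "finite (roots G h n)"
proof -
  obtain m where m: "m > 0" "\<And>v. Qf G h v \<ge> m * (norm v)^2" using Q_bound[OF pol] by blast
  define R where "R = sqrt ((2 * (of_int n)^2 / sq G h + 2) / m)"
  have "roots G h n \<subseteq> {v. v \<in> lat \<and> norm v \<le> R}"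
  proof
    fix v assume v: "v \<in> roots G h n"
    have "Qf G h v = 2 * (of_int n)^2 / sq G h + 2" using v by (simp add: roots_def Qf_def)
    hence "m * (norm v)^2 \<le> 2 * (of_int n)^2 / sq G h + 2" using m(2) by metis
    hence "(norm v)^2 \<le> (2 * (of_int n)^2 / sq G h + 2) / m" using m(1)
      by (simp add: field_simps)
    hence "norm v \<le> R" unfolding R_def by (simp add: real_le_rsqrt)
    then show "v \<in> {v. v \<in> lat \<and> norm v \<le> R}" using v by (simp add: roots_def)
  qed
  then show ?thesis using lat_finite finite_subset by blast
qed



lemma int01: "(m::real) \<in> \<int> \<Longrightarrow> 0 \<le> m \<Longrightarrow> m < 2 \<Longrightarrow> m = 0 \<or> m = 1"
  by (elim Ints_cases) auto

lemma intm1: assumes "(m::real) \<in> \<int>" "-2 < m" "m < 0" shows "m = -1"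
proof -
  obtain z where z: "m = of_int z" using assms(1) by (auto elim: Ints_cases)
  have "-2 < z" "z < 0" using assms z by simp_all
  then have "z = -1" by linarith
  then show ?thesis using z by simp
qed

lemma iso_aA1:
  assumes "finite S" "\<forall>x\<in>S. \<forall>y\<in>S. x \<noteq> y \<longrightarrow> w x y = 0"
  shows "graph_iso S w {0..<card S} aA1_mult"
proof -
  obtain f where "bij_betw f S {0..<card S}" using ex_bij_betw_finite_nat[OF assms(1)] by blast
  then show ?thesis using assms(2) unfolding graph_iso_def aA1_mult_def by blast
qed

lemma iso_A2aA1:
  assumes fin: "finite R" and d: "l1 \<noteq> l2" "l1 \<notin> R" "l2 \<notin> R"
    and w12: "w l1 l2 = 1" "w l2 l1 = 1"
    and w0: "\<forall>x\<in>insert l1 (insert l2 R). \<forall>y\<in>insert l1 (insert l2 R). x \<noteq> y \<longrightarrow>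
          {x, y} \<noteq> {l1, l2} \<longrightarrow> w x y = 0"
  shows "graph_iso (insert l1 (insert l2 R)) w {0..<card R + 2} A2aA1_mult"
proof -
  obtain g where g: "bij_betw g R {0..<card R}" using ex_bij_betw_finite_nat[OF fin] by blast
  define f where "f x = (if x = l1 then 0 else if x = l2 then 1 else g x + 2)" for x
  have fR: "\<And>x. x \<in> R \<Longrightarrow> f x = g x + 2" using d by (auto simp: f_def)
  have ginj: "inj_on g R" and gim: "g ` R = {0..<card R}" using g by (auto simp: bij_betw_def)
  have "inj_on f (insert l1 (insert l2 R))"
  proof (rule inj_onI)
    fix x y assume x: "x \<in> insert l1 (insert l2 R)" and y: "y \<in> insert l1 (insert l2 R)" and fxy: "f x = f y"
    show "x = y"
      using x y fxy d ginj fR by (auto simp: f_def inj_on_def split: if_splits)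
  qed
  moreover have "f ` (insert l1 (insert l2 R)) = {0..<card R + 2}"
  proof
    show "f ` insert l1 (insert l2 R) \<subseteq> {0..<card R + 2}"
      using gim d by (auto simp: f_def)
  next
    show "{0..<card R + 2} \<subseteq> f ` insert l1 (insert l2 R)"
    proof
      fix k assume k: "k \<in> {0..<card R + 2}"
      show "k \<in> f ` insert l1 (insert l2 R)"
      proof (cases "k < 2")
        case True
        then have "k = 0 \<or> k = 1" by auto
        then show ?thesis using d by (auto simp: f_def image_iff)
      next
        case False
        then have "k - 2 \<in> g ` R" using k gim by auto
        then obtain x where "x \<in> R" "g x = k - 2" by auto
        then show ?thesis using False fR by (intro image_eqI[of _ f x]) auto
      qed
    qed
  qed
  ultimately have b: "bij_betw f (insert l1 (insert l2 R)) {0..<card R + 2}" by (simp add: bij_betw_def)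
  have "\<forall>x\<in>insert l1 (insert l2 R). \<forall>y\<in>insert l1 (insert l2 R). x \<noteq> y \<longrightarrow>
          w x y = A2aA1_mult (f x) (f y)"
  proof (intro ballI impI)
    fix x y assume x: "x \<in> insert l1 (insert l2 R)" and y: "y \<in> insert l1 (insert l2 R)" and xy: "x \<noteq> y"
    show "w x y = A2aA1_mult (f x) (f y)"
    proof (cases "{x, y} = {l1, l2}")
      case True
      then have "(x = l1 \<and> y = l2) \<or> (x = l2 \<and> y = l1)" using xy by (auto simp: doubleton_eq_iff)
      then show ?thesis using w12 d by (auto simp: A2aA1_mult_def f_def)
    next
      case False
      have "{f x, f y} \<noteq> {0, 1}"
      proof
        assume "{f x, f y} = {0, 1}"
        then have "(f x = 0 \<and> f y = 1) \<or> (f x = 1 \<and> f y = 0)" by (auto simp: doubleton_eq_iff)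
        then have "(x = l1 \<and> y = l2) \<or> (x = l2 \<and> y = l1)" using x y by (auto simp: f_def split: if_splits)
        then show False using False by auto
      qed
      then show ?thesis using w0[rule_format, OF x y xy False] by (simp add: A2aA1_mult_def)
    qed
  qed
  then show ?thesis using b unfolding graph_iso_def by blast
qed



locale cfg =
  fixes G :: "int^'n^'n" and h \<xi> :: "real^'n"
  assumes pol: "polarized G h" and h8: "sq G h = 8" and adm: "admissible2 G h"
    and wv: "weyl_vector G h \<xi>"
begin

lemma ev: "even_lattice G" using pol by (simp add: polarized_def)
lemma hlat: "h \<in> lat" using pol by (simp add: polarized_def)
lemma sym: "bil G x y = bil G y x" using bil_sym[OF ev] .
lemma bs: "bil G a b = c \<Longrightarrow> bil G b a = c" using sym by simp
lemma hh: "bil G h h = 8" using h8 by (simp add: sq_def)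

lemma negdef: assumes "bil G w h = 0" shows "sq G w \<le> 0"
proof (cases "w = 0")
  case True then show ?thesis by (simp add: sq_def)
next
  case False
  have "hyperbolic G" using pol by (simp add: polarized_def)
  moreover have "sq G h > 0" using h8 by simp
  moreover have "bil G h w = 0" using assms bs by blast
  ultimately have "sq G w < 0" using False unfolding hyperbolic_def by blast
  then show ?thesis by simp
qed

lemma negdef_strict: assumes "bil G w h = 0" "w \<noteq> 0" shows "sq G w < 0"
proof -
  have "hyperbolic G" using pol by (simp add: polarized_def)
  moreover have "sq G h > 0" using h8 by simp
  moreover have "bil G h w = 0" using assms bs by blast
  ultimately show "sq G w < 0" using assms unfolding hyperbolic_def by blast
qed

lemma noiso: "w \<in> lat \<Longrightarrow> sq G w = 0 \<Longrightarrow> bil G w h = 1 \<or> bil G w h = 2 \<Longrightarrow> False"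
  using adm unfolding admissible2_def isotropic_def by auto

lemma pos_fin: "finite (pos_roots G h \<xi>)"
  by (rule finite_subset[OF _ roots_finite[OF pol, of 0]]) (auto simp: pos_roots_def)

lemma line_pos:
  assumes l: "\<forall>s\<in>simple_roots G h \<xi>. bil G l s \<ge> 0" and r: "r \<in> pos_roots G h \<xi>"
  shows "bil G l r \<ge> 0"
proof -
  define P where "P = pos_roots G h \<xi>"
  have finP: "finite P" using pos_fin P_def by simp
  have "\<forall>r\<in>P. card {s\<in>P. bil G s \<xi> < bil G r \<xi>} = n \<longrightarrow> bil G l r \<ge> 0" for n
  proof (induction n rule: less_induct)
    case (less n)
    show ?case
    proof (intro ballI impI)
      fix r assume rP: "r \<in> P" and cn: "card {s\<in>P. bil G s \<xi> < bil G r \<xi>} = n"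
      show "bil G l r \<ge> 0"
      proof (cases "r \<in> simple_roots G h \<xi>")
        case True then show ?thesis using l by blast
      next
        case False
        then have "\<exists>s\<in>P. \<exists>t\<in>P. r = s + t"
          using rP unfolding simple_roots_def P_def by simp
        then obtain s t where s: "s \<in> P" and t: "t \<in> P" and rst: "r = s + t" by blast
        have sp: "bil G s \<xi> > 0" and tp: "bil G t \<xi> > 0" using s t by (simp_all add: P_def pos_roots_def)
        have rsum: "bil G r \<xi> = bil G s \<xi> + bil G t \<xi>" using rst by (simp add: bil_add_left)
        have IH: "bil G l u \<ge> 0" if u: "u \<in> P" "bil G u \<xi> < bil G r \<xi>" for u
        proof -
          have sub: "{s'\<in>P. bil G s' \<xi> < bil G u \<xi>} \<subseteq> {s'\<in>P. bil G s' \<xi> < bil G r \<xi>}"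
          proof
            fix x assume "x \<in> {s'\<in>P. bil G s' \<xi> < bil G u \<xi>}"
            then show "x \<in> {s'\<in>P. bil G s' \<xi> < bil G r \<xi>}" using u(2) by simp
          qed
          have "u \<in> {s'\<in>P. bil G s' \<xi> < bil G r \<xi>}" "u \<notin> {s'\<in>P. bil G s' \<xi> < bil G u \<xi>}"
            using u by simp_all
          then have ps: "{s'\<in>P. bil G s' \<xi> < bil G u \<xi>} \<subset> {s'\<in>P. bil G s' \<xi> < bil G r \<xi>}"
            using sub by blast
          have fin: "finite {s'\<in>P. bil G s' \<xi> < bil G r \<xi>}" using finP by simp
          have "card {s'\<in>P. bil G s' \<xi> < bil G u \<xi>} < n"
            using psubset_card_mono[OF fin ps] cn by simp
          then show ?thesis using less.IH u(1) by blast
        qed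
        have "bil G l s \<ge> 0" using IH[OF s] rsum tp by linarith
        moreover have "bil G l t \<ge> 0" using IH[OF t] rsum sp by linarith
        ultimately show ?thesis using rst by (simp add: bil_add_right)
      qed
    qed
  qed
  then show ?thesis using r P_def by blast
qed

lemma root_sign: assumes r: "r \<in> roots G h 0" shows "r \<in> pos_roots G h \<xi> \<or> - r \<in> pos_roots G h \<xi>"
proof -
  have nz: "bil G r \<xi> \<noteq> 0" using wv r unfolding weyl_vector_def by blast
  have rl: "r \<in> lat" "sq G r = -2" "bil G r h = 0" using r by (simp_all add: roots_def)
  have "- r \<in> lat" using rl(1) by (rule lat_minus)
  moreover have "sq G (- r) = -2" using rl(2) unfolding sq_def by (simp add: bil_minus_left bil_minus_right)
  moreover have "bil G (- r) h = 0" using rl(3) by (simp add: bil_minus_left)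
  ultimately have mr: "- r \<in> roots G h 0" by (simp add: roots_def)
  show ?thesis
  proof (cases "bil G r \<xi> > 0")
    case True then show ?thesis using r by (simp add: pos_roots_def)
  next
    case False
    then have "bil G (- r) \<xi> > 0" using nz by (simp add: bil_minus_left)
    then show ?thesis using mr by (simp add: pos_roots_def)
  qed
qed

lemma fanoD: assumes "l \<in> fano G h \<xi>"
  shows "l \<in> lat" "bil G l l = -2" "bil G l h = 1" "\<forall>s\<in>simple_roots G h \<xi>. bil G l s \<ge> 0"
  using assms by (auto simp: fano_def roots_def sq_def)

lemma fano_ne:
  assumes l1: "l1 \<in> fano G h \<xi>" and l2: "l2 \<in> fano G h \<xi>" and d: "l1 \<noteq> l2"
  shows "bil G l1 l2 \<ge> 0" "bil G l1 l2 \<in> \<int>"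
proof -
  note f1 = fanoD[OF l1] and f2 = fanoD[OF l2]
  define m where "m = bil G l1 l2"
  have m2: "bil G l2 l1 = m" unfolding m_def by (rule sym)
  show mi: "bil G l1 l2 \<in> \<int>" using bil_Ints f1(1) f2(1) by blast
  have "bil G (l1 - l2) h = 0" using f1 f2 by (simp add: bil_lin)
  moreover have "l1 - l2 \<noteq> 0" using d by simp
  ultimately have "sq G (l1 - l2) < 0" by (rule negdef_strict)
  moreover have "sq G (l1 - l2) = -4 - 2 * m" unfolding sq_def using f1 f2 m_def m2 by (simp add: bil_lin)
  ultimately have mg: "m > -2" by simp
  show "bil G l1 l2 \<ge> 0"
  proof (rule ccontr)
    assume "\<not> bil G l1 l2 \<ge> 0"
    then have "m < 0" using m_def by simp
    moreover have "m \<in> \<int>" using mi m_def by simp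
    ultimately have "m = -1" using intm1 mg by blast
    have rr: "l1 - l2 \<in> roots G h 0"
      using f1 f2 m_def m2 \<open>m = -1\<close> by (simp add: roots_def lat_diff sq_def bil_lin)
    show False
    proof (cases "l1 - l2 \<in> pos_roots G h \<xi>")
      case True
      then have "bil G l1 (l1 - l2) \<ge> 0" using line_pos f1(4) by blast
      then show False using f1 m_def \<open>m = -1\<close> by (simp add: bil_lin)
    next
      case False
      then have "- (l1 - l2) \<in> pos_roots G h \<xi>" using root_sign rr by blast
      then have "bil G l2 (- (l1 - l2)) \<ge> 0" using line_pos f2(4) by blast
      then show False using f2 m2 \<open>m = -1\<close> by (simp add: bil_lin)
    qed
  qed
qed

lemma sumA:
  fixes c :: real
  assumes fin: "finite A" and A: "\<forall>l\<in>A. bil G l h = 1 \<and> bil G l e = c \<and> bil G l l = -2"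
    and A0: "\<forall>l\<in>A. \<forall>l'\<in>A. l \<noteq> l' \<longrightarrow> bil G l l' = 0"
  shows "bil G (\<Sum>A) h = card A" "bil G (\<Sum>A) e = c * card A"
    "x \<in> A \<Longrightarrow> bil G x (\<Sum>A) = -2" "bil G (\<Sum>A) (\<Sum>A) = -2 * card A"
proof -
  show "bil G (\<Sum>A) h = card A" using A by (simp add: bil_sum_left)
  show "bil G (\<Sum>A) e = c * card A" using A by (simp add: bil_sum_left)
  have X: "bil G x (\<Sum>A) = -2" if x: "x \<in> A" for x
  proof -
    have "bil G x (\<Sum>A) = (\<Sum>l\<in>A. bil G x l)" by (simp add: bil_sum_right)
    also have "\<dots> = bil G x x + (\<Sum>l\<in>A-{x}. bil G x l)" using fin x by (simp add: sum.remove)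
    also have "(\<Sum>l\<in>A-{x}. bil G x l) = 0" using A0 x by (intro sum.neutral) auto
    finally show ?thesis using A x by simp
  qed
  then show "x \<in> A \<Longrightarrow> bil G x (\<Sum>A) = -2" .
  show "bil G (\<Sum>A) (\<Sum>A) = -2 * card A" using X by (simp add: bil_sum_left)
qed

lemma star_fin: "finite (star G h \<xi> e)"
  by (rule finite_subset[OF _ roots_finite[OF pol, of 1]]) (auto simp: star_def fano_def)

lemma starD: assumes "l \<in> star G h \<xi> e"
  shows "l \<in> fano G h \<xi>" "l \<in> lat" "bil G l l = -2" "bil G l h = 1" "bil G l e = 1"
  using assms fanoD[of l] by (auto simp: star_def)

end

context cfg begin


lemma line_pair:
  assumes e: "e \<in> fano G h \<xi>" and l1: "l1 \<in> star G h \<xi> e" and l2: "l2 \<in> star G h \<xi> e"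
    and d: "l1 \<noteq> l2"
  shows "bil G l1 l2 = 0 \<or> bil G l1 l2 = 1"
proof -
  note er = fanoD[OF e]
  note E = er(2) er(3) bs[OF er(3)] hh
  note a1 = starD[OF l1] and a2 = starD[OF l2]
  define m where "m = bil G l1 l2"
  have m2: "bil G l2 l1 = m" unfolding m_def by (rule sym)
  have m0: "m \<ge> 0" "m \<in> \<int>" using fano_ne[OF a1(1) a2(1) d] m_def by simp_all
  note F = E a1(3-5) a2(3-5) bs[OF a1(4)] bs[OF a1(5)] bs[OF a2(4)] bs[OF a2(5)] m2 m_def[symmetric]
  define w where "w = l1 + l2 + (-6/17) *\<^sub>R h + (14/17) *\<^sub>R e"
  have "bil G w h = 0" unfolding w_def using F by (simp add: bil_lin)
  then have "sq G w \<le> 0" by (rule negdef)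
  moreover have "sq G w = 2*m - 52/17" unfolding w_def sq_def using F by (simp add: bil_lin algebra_simps)
  ultimately have "m < 2" by simp
  then show ?thesis using int01 m0 m_def by blast
qed

lemma line_triple:
  assumes e: "e \<in> fano G h \<xi>" and l1: "l1 \<in> star G h \<xi> e" and l2: "l2 \<in> star G h \<xi> e"
    and l3: "l3 \<in> star G h \<xi> e" and d: "l1 \<noteq> l2" "l1 \<noteq> l3" "l2 \<noteq> l3"
  shows "bil G l1 l2 + bil G l1 l3 + bil G l2 l3 \<le> 1"
proof -
  note er = fanoD[OF e]
  note E = er(2) er(3) bs[OF er(3)] hh
  note a1 = starD[OF l1] and a2 = starD[OF l2] and a3 = starD[OF l3]
  define m12 where "m12 = bil G l1 l2"
  define m13 where "m13 = bil G l1 l3"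
  define m23 where "m23 = bil G l2 l3"
  have ms: "bil G l2 l1 = m12" "bil G l3 l1 = m13" "bil G l3 l2 = m23"
    unfolding m12_def m13_def m23_def by (rule sym)+
  note F = E a1(3-5) a2(3-5) a3(3-5) bs[OF a1(4)] bs[OF a1(5)] bs[OF a2(4)] bs[OF a2(5)]
    bs[OF a3(4)] bs[OF a3(5)] ms m12_def[symmetric] m13_def[symmetric] m23_def[symmetric]
  define w where "w = l1 + l2 + l3 + (-9/17) *\<^sub>R h + (21/17) *\<^sub>R e"
  have "bil G w h = 0" unfolding w_def using F by (simp add: bil_lin)
  then have "sq G w \<le> 0" by (rule negdef)
  moreover have "sq G w = 2*(m12 + m13 + m23) - 66/17" unfolding w_def sq_def using F
    by (simp add: bil_lin algebra_simps)
  ultimately have "m12 + m13 + m23 < 2" by simp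
  moreover have "m12 + m13 + m23 \<in> \<int>" unfolding m12_def m13_def m23_def
    using bil_Ints a1(2) a2(2) a3(2) by (intro Ints_add) blast+
  moreover have "m12 + m13 + m23 \<ge> 0" unfolding m12_def m13_def m23_def
    using fano_ne a1(1) a2(1) a3(1) d by (smt (verit))
  ultimately have "m12 + m13 + m23 = 0 \<or> m12 + m13 + m23 = 1" using int01 by blast
  then show ?thesis unfolding m12_def m13_def m23_def by linarith
qed

lemma line_disjoint_count:
  assumes e: "e \<in> fano G h \<xi>" and B: "B \<subseteq> star G h \<xi> e" "finite B"
    and B0: "\<forall>l\<in>B. \<forall>l'\<in>B. l \<noteq> l' \<longrightarrow> bil G l l' = 0"
  shows "card B \<le> 8"
proof (rule ccontr)
  assume "\<not> card B \<le> 8"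
  then obtain C where C: "C \<subseteq> B" "card C = 9" "finite C"
    using obtain_subset_with_card_n[of 9 B] by auto
  note er = fanoD[OF e]
  note E = er(2) er(3) bs[OF er(3)] hh
  have CA: "\<forall>l\<in>C. bil G l h = 1 \<and> bil G l e = 1 \<and> bil G l l = -2" using C(1) B(1) starD by blast
  have C0: "\<forall>l\<in>C. \<forall>l'\<in>C. l \<noteq> l' \<longrightarrow> bil G l l' = 0" using C(1) B0 by blast
  note sA = sumA[OF C(3) CA C0]
  note F = E sA(1) sA(2) sA(4) bs[OF sA(1)] bs[OF sA(2)] C(2)
  define w where "w = (\<Sum>C) + (-27/17) *\<^sub>R h + (63/17) *\<^sub>R e"
  have "bil G w h = 0" unfolding w_def using F by (simp add: bil_lin)
  then have "sq G w \<le> 0" by (rule negdef)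
  moreover have "sq G w = 18/17" unfolding w_def sq_def using F by (simp add: bil_lin algebra_simps)
  ultimately show False by simp
qed

lemma part1:
  assumes e: "e \<in> fano G h \<xi>"
  shows "(\<exists>a\<le>3. star_iso_A2aA1 G h \<xi> e a) \<or> (\<exists>a\<le>8. star_iso_aA1 G h \<xi> e a)"
proof -
  let ?S = "star G h \<xi> e"
  note er = fanoD[OF e]
  note E = er(2) er(3) bs[OF er(3)] hh
  have finS: "finite ?S" by (rule star_fin)
  show ?thesis
  proof (cases "\<exists>l1\<in>?S. \<exists>l2\<in>?S. l1 \<noteq> l2 \<and> bil G l1 l2 = 1")
    case False
    then have S0: "\<forall>l\<in>?S. \<forall>l'\<in>?S. l \<noteq> l' \<longrightarrow> bil G l l' = 0"
      using line_pair[OF e] by blast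
    have "card ?S \<le> 8" using line_disjoint_count[OF e subset_refl finS S0] .
    moreover have "star_iso_aA1 G h \<xi> e (card ?S)" unfolding star_iso_aA1_def
      by (rule iso_aA1[OF finS S0])
    ultimately show ?thesis by blast
  next
    case True
    then obtain l1 l2 where l1: "l1 \<in> ?S" and l2: "l2 \<in> ?S" and d: "l1 \<noteq> l2"
      and m: "bil G l1 l2 = 1" by blast
    note a1 = starD[OF l1] and a2 = starD[OF l2]
    define R where "R = ?S - {l1, l2}"
    have finR: "finite R" using finS R_def by simp
    have SR: "?S = insert l1 (insert l2 R)" using l1 l2 R_def by auto
    have Rx: "bil G x l1 = 0 \<and> bil G x l2 = 0" if x: "x \<in> R" for x
    proof -
      have xS: "x \<in> ?S" and x1: "x \<noteq> l1" and x2: "x \<noteq> l2" using x R_def by auto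
      have "bil G l1 l2 + bil G l1 x + bil G l2 x \<le> 1" using line_triple[OF e l1 l2 xS d] x1 x2 by metis
      moreover have "bil G l1 x \<ge> 0" "bil G l2 x \<ge> 0"
        using fano_ne a1(1) a2(1) starD(1)[OF xS] x1 x2 by metis+
      ultimately have "bil G l1 x = 0" "bil G l2 x = 0" using m by linarith+
      then show ?thesis using bs by blast
    qed
    have R0: "bil G x y = 0" if x: "x \<in> R" and y: "y \<in> R" and xy: "x \<noteq> y" for x y
    proof (rule ccontr)
      assume ne: "bil G x y \<noteq> 0"
      have xS: "x \<in> ?S" and yS: "y \<in> ?S" using x y R_def by auto
      note ax = starD[OF xS] and ay = starD[OF yS]
      have mxy: "bil G x y = 1" using line_pair[OF e xS yS xy] ne by blast
      note F = E a1(3-5) a2(3-5) ax(3-5) ay(3-5) bs[OF a1(4)] bs[OF a1(5)] bs[OF a2(4)] bs[OF a2(5)]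
        bs[OF ax(4)] bs[OF ax(5)] bs[OF ay(4)] bs[OF ay(5)] m bs[OF m] mxy bs[OF mxy]
        Rx[OF x] Rx[OF y] bs[OF conjunct1[OF Rx[OF x]]] bs[OF conjunct2[OF Rx[OF x]]]
        bs[OF conjunct1[OF Rx[OF y]]] bs[OF conjunct2[OF Rx[OF y]]]
      define v where "v = h - 2 *\<^sub>R e - l1 - l2 - x - y"
      have "v \<in> lat" unfolding v_def using hlat er(1) a1(2) a2(2) ax(2) ay(2)
        by (intro lat_diff lat_scale) auto
      moreover have "sq G v = 0" unfolding v_def sq_def using F by (simp add: bil_lin algebra_simps)
      moreover have "bil G v h = 2" unfolding v_def using F by (simp add: bil_lin algebra_simps)
      ultimately show False using noiso by blast
    qed
    have cardR: "card R \<le> 3"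
    proof (rule ccontr)
      assume "\<not> card R \<le> 3"
      then obtain B where B: "B \<subseteq> R" "card B = 4" "finite B"
        using obtain_subset_with_card_n[of 4 R] by auto
      have BS: "B \<subseteq> ?S" using B(1) R_def by auto
      have BA: "\<forall>l\<in>B. bil G l h = 1 \<and> bil G l e = 1 \<and> bil G l l = -2" using BS starD by blast
      have B0: "\<forall>l\<in>B. \<forall>l'\<in>B. l \<noteq> l' \<longrightarrow> bil G l l' = 0" using B(1) R0 by blast
      note sA = sumA[OF B(3) BA B0]
      have B1: "bil G (\<Sum>B) l1 = 0" "bil G (\<Sum>B) l2 = 0"
        using B(1) Rx by (simp_all add: bil_sum_left subset_iff)
      obtain l3 where l3B: "l3 \<in> B" using B(2) by (metis card.empty ex_in_conv zero_neq_numeral)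
      have l3S: "l3 \<in> ?S" using l3B BS by auto
      note a3 = starD[OF l3S]
      have l3R: "l3 \<in> R" using l3B B(1) by auto
      note F = E a1(3-5) a2(3-5) a3(3-5) bs[OF a1(4)] bs[OF a1(5)] bs[OF a2(4)] bs[OF a2(5)]
        bs[OF a3(4)] bs[OF a3(5)] m bs[OF m]
        Rx[OF l3R] bs[OF conjunct1[OF Rx[OF l3R]]] bs[OF conjunct2[OF Rx[OF l3R]]]
        sA(1) sA(2) sA(3)[OF l3B] sA(4) bs[OF sA(1)] bs[OF sA(2)] bs[OF sA(3)[OF l3B]] B1 bs[OF B1(1)] bs[OF B1(2)] B(2)
      define r where "r = 2 *\<^sub>R e + l1 + l2 + (\<Sum>B) - h"
      have rlat: "r \<in> lat" unfolding r_def using hlat er(1) a1(2) a2(2) lat_sum[of B "\<lambda>x. x"] BS starD(2)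
        by (intro lat_diff lat_add lat_scale) auto
      have "sq G r = -2" unfolding r_def sq_def using F by (simp add: bil_lin algebra_simps)
      moreover have "bil G r h = 0" unfolding r_def using F by (simp add: bil_lin algebra_simps)
      ultimately have rr: "r \<in> roots G h 0" using rlat by (simp add: roots_def)
      have er1: "bil G e r = 1" unfolding r_def using F by (simp add: bil_lin algebra_simps)
      have l3r: "bil G l3 r = -1" unfolding r_def using F by (simp add: bil_lin algebra_simps)
      show False
      proof (cases "r \<in> pos_roots G h \<xi>")
        case True
        then have "bil G l3 r \<ge> 0" using line_pos a3(1) fanoD(4) by blast
        then show False using l3r by simp
      next
        case False
        then have "- r \<in> pos_roots G h \<xi>" using root_sign rr by blast
        then have "bil G e (- r) \<ge> 0" using line_pos er(4) by blast
        then show False using er1 by (simp add: bil_minus_right)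
      qed
    qed
    have l1R: "l1 \<notin> R" and l2R: "l2 \<notin> R" using R_def by auto
    have w0: "\<forall>x\<in>insert l1 (insert l2 R). \<forall>y\<in>insert l1 (insert l2 R). x \<noteq> y \<longrightarrow>
          {x, y} \<noteq> {l1, l2} \<longrightarrow> bil G x y = 0"
    proof (intro ballI impI)
      fix x y assume x: "x \<in> insert l1 (insert l2 R)" and y: "y \<in> insert l1 (insert l2 R)"
        and xy: "x \<noteq> y" and ne: "{x, y} \<noteq> {l1, l2}"
      show "bil G x y = 0"
      proof (cases "x \<in> R")
        case xR: True
        show ?thesis
        proof (cases "y \<in> R")
          case True then show ?thesis using R0 xR xy by blast
        next
          case False then have "y = l1 \<or> y = l2" using y by auto
          then show ?thesis using Rx[OF xR] by auto
        qed
      next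
        case xR: False
        then have x12: "x = l1 \<or> x = l2" using x by auto
        show ?thesis
        proof (cases "y \<in> R")
          case True then show ?thesis using Rx[OF True] x12 bs by metis
        next
          case False then have "y = l1 \<or> y = l2" using y by auto
          then show ?thesis using x12 xy ne by auto
        qed
      qed
    qed
    have "graph_iso (insert l1 (insert l2 R)) (bil G) {0..<card R + 2} A2aA1_mult"
      by (rule iso_A2aA1[OF finR d l1R l2R m bs[OF m] w0])
    then have "star_iso_A2aA1 G h \<xi> e (card R)" unfolding star_iso_A2aA1_def SR[symmetric] .
    then show ?thesis using cardR by blast
  qed
qed

lemma part3: assumes e: "e \<in> simple_roots G h \<xi>" shows "\<exists>a\<le>5. star_iso_aA1 G h \<xi> e a"
proof -
  have eP: "e \<in> pos_roots G h \<xi>" using e by (simp add: simple_roots_def)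
  then have er: "e \<in> lat" "bil G e e = -2" "bil G e h = 0" by (simp_all add: pos_roots_def roots_def sq_def)
  note E = er(2) er(3) bs[OF er(3)] hh
  let ?S = "star G h \<xi> e"
  have pair: "bil G l1 l2 = 0" if l1: "l1 \<in> ?S" and l2: "l2 \<in> ?S" and d: "l1 \<noteq> l2" for l1 l2
  proof -
    note a1 = starD[OF l1] and a2 = starD[OF l2]
    define m where "m = bil G l1 l2"
    have m2: "bil G l2 l1 = m" unfolding m_def by (rule sym)
    have m0: "m \<ge> 0" "m \<in> \<int>" using fano_ne[OF a1(1) a2(1) d] m_def by simp_all
    note F = E a1(3-5) a2(3-5) bs[OF a1(4)] bs[OF a1(5)] bs[OF a2(4)] bs[OF a2(5)] m2 m_def[symmetric]
    define w where "w = l1 + l2 + (-1/4) *\<^sub>R h + e"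
    have "bil G w h = 0" unfolding w_def using F by (simp add: bil_lin)
    then have "sq G w \<le> 0" by (rule negdef)
    moreover have "sq G w = 2*m - 5/2" unfolding w_def sq_def using F by (simp add: bil_lin algebra_simps)
    ultimately have "m < 2" by simp
    then have m01: "m = 0 \<or> m = 1" using int01 m0 by blast
    moreover have "m \<noteq> 1"
    proof
      assume m1: "m = 1"
      have "e + l1 + l2 \<in> lat" using er(1) a1(2) a2(2) by (simp add: lat_add)
      moreover have "sq G (e + l1 + l2) = 0" unfolding sq_def using F m1 by (simp add: bil_lin)
      moreover have "bil G (e + l1 + l2) h = 2" using F by (simp add: bil_lin)
      ultimately show False using noiso by blast
    qed
    ultimately show ?thesis using m_def by simp
  qed
  have card: "card ?S \<le> 5"
  proof (rule ccontr)
    assume "\<not> card ?S \<le> 5"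
    then obtain B where B: "B \<subseteq> ?S" "card B = 6" "finite B"
      using obtain_subset_with_card_n[of 6 ?S] by auto
    have BA: "\<forall>l\<in>B. bil G l h = 1 \<and> bil G l e = 1 \<and> bil G l l = -2" using B(1) starD by blast
    have B0: "\<forall>l\<in>B. \<forall>l'\<in>B. l \<noteq> l' \<longrightarrow> bil G l l' = 0" using B(1) pair by blast
    note sA = sumA[OF B(3) BA B0]
    note F = E sA(1) sA(2) sA(4) bs[OF sA(1)] bs[OF sA(2)] B(2)
    define w where "w = (\<Sum>B) + (-3/4) *\<^sub>R h + 3 *\<^sub>R e"
    have "bil G w h = 0" unfolding w_def using F by (simp add: bil_lin)
    then have "sq G w \<le> 0" by (rule negdef)
    moreover have "sq G w = 3/2" unfolding w_def sq_def using F by (simp add: bil_lin algebra_simps)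
    ultimately show False by simp
  qed
  have "star_iso_aA1 G h \<xi> e (card ?S)" unfolding star_iso_aA1_def
    by (rule iso_aA1[OF star_fin]) (use pair in blast)
  then show ?thesis using card by blast
qed


lemma noiso3: "admissible3 G h \<Longrightarrow> w \<in> lat \<Longrightarrow> sq G w = 0 \<Longrightarrow> bil G w h = 3 \<Longrightarrow> False"
  unfolding admissible3_def isotropic_def by auto

lemma part2:
  assumes a3: "admissible3 G h" and e: "e \<in> fano G h \<xi>"
  shows "\<exists>a\<le>7. star_iso_aA1 G h \<xi> e a"
proof -
  let ?S = "star G h \<xi> e"
  note er = fanoD[OF e]
  note E = er(2) er(3) bs[OF er(3)] hh
  have finS: "finite ?S" by (rule star_fin)
  have S0: "bil G l1 l2 = 0" if l1: "l1 \<in> ?S" and l2: "l2 \<in> ?S" and d: "l1 \<noteq> l2" for l1 l2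
  proof (rule ccontr)
    assume "bil G l1 l2 \<noteq> 0"
    then have m: "bil G l1 l2 = 1" using line_pair[OF e l1 l2 d] by blast
    note a1 = starD[OF l1] and a2 = starD[OF l2]
    note F = E a1(3-5) a2(3-5) bs[OF a1(4)] bs[OF a1(5)] bs[OF a2(4)] bs[OF a2(5)] m bs[OF m]
    have "e + l1 + l2 \<in> lat" using er(1) a1(2) a2(2) by (simp add: lat_add)
    moreover have "sq G (e + l1 + l2) = 0" unfolding sq_def using F by (simp add: bil_lin)
    moreover have "bil G (e + l1 + l2) h = 3" using F by (simp add: bil_lin)
    ultimately show False using noiso3[OF a3] by blast
  qed
  have card: "card ?S \<le> 7"
  proof (rule ccontr)
    assume "\<not> card ?S \<le> 7"
    then obtain C where C: "C \<subseteq> ?S" "card C = 8" "finite C"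
      using obtain_subset_with_card_n[of 8 ?S] by auto
    have CA: "\<forall>l\<in>C. bil G l h = 1 \<and> bil G l e = 1 \<and> bil G l l = -2" using C(1) starD by blast
    have C0: "\<forall>l\<in>C. \<forall>l'\<in>C. l \<noteq> l' \<longrightarrow> bil G l l' = 0" using C(1) S0 by blast
    note sA = sumA[OF C(3) CA C0]
    note F = E sA(1) sA(2) sA(4) bs[OF sA(1)] bs[OF sA(2)] C(2)
    define v where "v = (\<Sum>C) - h + 3 *\<^sub>R e"
    have "v \<in> lat" unfolding v_def using hlat er(1) lat_sum[of C "\<lambda>x. x"] C(1) starD(2)
      by (intro lat_diff lat_add lat_scale) auto
    moreover have "sq G v = 0" unfolding v_def sq_def using F by (simp add: bil_lin algebra_simps)
    moreover have "bil G v h = 3" unfolding v_def using F by (simp add: bil_lin algebra_simps)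
    ultimately show False using noiso3[OF a3] by blast
  qed
  have "star_iso_aA1 G h \<xi> e (card ?S)" unfolding star_iso_aA1_def
    by (rule iso_aA1[OF finS]) (use S0 in blast)
  then show ?thesis using card by blast
qed

lemma part4:
  assumes iso: "isotropic G h 3 e" and eP: "e \<in> Pbar G h \<xi>"
  shows "star_iso_A2aA1 G h \<xi> e 0 \<or> (\<exists>a\<le>9. star_iso_aA1 G h \<xi> e a)"
proof -
  let ?S = "star G h \<xi> e"
  have er: "e \<in> lat" "bil G e e = 0" "bil G e h = 3" using iso by (simp_all add: isotropic_def sq_def)
  have epos: "\<forall>r\<in>pos_roots G h \<xi>. bil G e r \<ge> 0" using eP by (simp add: Pbar_def)
  note E = er(2) er(3) bs[OF er(3)] hh
  have finS: "finite ?S" by (rule star_fin)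
  have pair: "bil G l1 l2 = 0 \<or> bil G l1 l2 = 1" if l1: "l1 \<in> ?S" and l2: "l2 \<in> ?S" and d: "l1 \<noteq> l2" for l1 l2
  proof -
    note a1 = starD[OF l1] and a2 = starD[OF l2]
    define m where "m = bil G l1 l2"
    have m2: "bil G l2 l1 = m" unfolding m_def by (rule sym)
    have m0: "m \<ge> 0" "m \<in> \<int>" using fano_ne[OF a1(1) a2(1) d] m_def by simp_all
    note F = E a1(3-5) a2(3-5) bs[OF a1(4)] bs[OF a1(5)] bs[OF a2(4)] bs[OF a2(5)] m2 m_def[symmetric]
    define w where "w = l1 + l2 + (-2/3) *\<^sub>R h + (10/9) *\<^sub>R e"
    have "bil G w h = 0" unfolding w_def using F by (simp add: bil_lin)
    then have "sq G w \<le> 0" by (rule negdef)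
    moreover have "sq G w = 2*m - 28/9" unfolding w_def sq_def using F by (simp add: bil_lin algebra_simps)
    ultimately have "m < 2" by simp
    then show ?thesis using int01 m0 m_def by blast
  qed
  show ?thesis
  proof (cases "\<exists>l1\<in>?S. \<exists>l2\<in>?S. l1 \<noteq> l2 \<and> bil G l1 l2 = 1")
    case False
    then have S0: "\<forall>l\<in>?S. \<forall>l'\<in>?S. l \<noteq> l' \<longrightarrow> bil G l l' = 0" using pair by blast
    have card: "card ?S \<le> 9"
    proof (rule ccontr)
      assume "\<not> card ?S \<le> 9"
      then obtain C where C: "C \<subseteq> ?S" "card C = 10" "finite C"
        using obtain_subset_with_card_n[of 10 ?S] by auto
      have CA: "\<forall>l\<in>C. bil G l h = 1 \<and> bil G l e = 1 \<and> bil G l l = -2" using C(1) starD by blast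
      have C0: "\<forall>l\<in>C. \<forall>l'\<in>C. l \<noteq> l' \<longrightarrow> bil G l l' = 0" using C(1) S0 by blast
      note sA = sumA[OF C(3) CA C0]
      note F = E sA(1) sA(2) sA(4) bs[OF sA(1)] bs[OF sA(2)] C(2)
      define w where "w = (\<Sum>C) + (-10/3) *\<^sub>R h + (50/9) *\<^sub>R e"
      have "bil G w h = 0" unfolding w_def using F by (simp add: bil_lin)
      then have "sq G w \<le> 0" by (rule negdef)
      moreover have "sq G w = 20/9" unfolding w_def sq_def using F by (simp add: bil_lin algebra_simps)
      ultimately show False by simp
    qed
    have "star_iso_aA1 G h \<xi> e (card ?S)" unfolding star_iso_aA1_def by (rule iso_aA1[OF finS S0])
    then show ?thesis using card by blast
  next
    case True
    then obtain l1 l2 where l1: "l1 \<in> ?S" and l2: "l2 \<in> ?S" and d: "l1 \<noteq> l2"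
      and m: "bil G l1 l2 = 1" by blast
    note a1 = starD[OF l1] and a2 = starD[OF l2]
    note F = E a1(3-5) a2(3-5) bs[OF a1(4)] bs[OF a1(5)] bs[OF a2(4)] bs[OF a2(5)] m bs[OF m]
    define r where "r = 2 *\<^sub>R e + l1 + l2 - h"
    have rlat: "r \<in> lat" unfolding r_def using hlat er(1) a1(2) a2(2)
      by (intro lat_diff lat_add lat_scale) auto
    have "sq G r = -2" unfolding r_def sq_def using F by (simp add: bil_lin algebra_simps)
    moreover have "bil G r h = 0" unfolding r_def using F by (simp add: bil_lin algebra_simps)
    ultimately have rr: "r \<in> roots G h 0" using rlat by (simp add: roots_def)
    have er1: "bil G e r = -1" unfolding r_def using F by (simp add: bil_lin algebra_simps)
    have rneg: "- r \<in> pos_roots G h \<xi>"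
    proof -
      have "r \<notin> pos_roots G h \<xi>" using epos er1 by force
      then show ?thesis using root_sign rr by blast
    qed
    have SR: "?S = insert l1 (insert l2 {})"
    proof (rule ccontr)
      assume "?S \<noteq> insert l1 (insert l2 {})"
      then obtain x where xS: "x \<in> ?S" and x1: "x \<noteq> l1" and x2: "x \<noteq> l2" using l1 l2 by blast
      note ax = starD[OF xS]
      have g1: "bil G x l1 \<ge> 0" "bil G x l2 \<ge> 0" using fano_ne ax(1) a1(1) a2(1) x1 x2 by metis+
      have "bil G x (- r) \<ge> 0" using line_pos ax(1) fanoD(4) rneg by blast
      moreover have "bil G x (- r) = - (2 + bil G x l1 + bil G x l2 - 1)" unfolding r_def
        using ax by (simp add: bil_lin algebra_simps)
      ultimately show False using g1 by linarith
    qed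
    have "graph_iso (insert l1 (insert l2 {})) (bil G) {0..<card ({}::(real^'n) set) + 2} A2aA1_mult"
      by (rule iso_A2aA1) (use d m bs[OF m] in auto)
    then have "star_iso_A2aA1 G h \<xi> e 0" unfolding star_iso_A2aA1_def SR by simp
    then show ?thesis by blast
  qed
qed

end

theorem lemma5p1:
  fixes G :: "int^'n^'n" and h \<xi> :: "real^'n"
  assumes "polarized G h" and "sq G h = 8" and "admissible2 G h"
    and "weyl_vector G h \<xi>"
  shows "(\<forall>e\<in>fano G h \<xi>.
            (\<exists>a\<le>3. star_iso_A2aA1 G h \<xi> e a) \<or> (\<exists>a\<le>8. star_iso_aA1 G h \<xi> e a))
       \<and> (admissible3 G h \<longrightarrow> (\<forall>e\<in>fano G h \<xi>. \<exists>a\<le>7. star_iso_aA1 G h \<xi> e a))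
       \<and> (\<forall>e\<in>simple_roots G h \<xi>. \<exists>a\<le>5. star_iso_aA1 G h \<xi> e a)
       \<and> (\<forall>e. isotropic G h 3 e \<and> e \<in> Pbar G h \<xi> \<longrightarrow>
            star_iso_A2aA1 G h \<xi> e 0 \<or> (\<exists>a\<le>9. star_iso_aA1 G h \<xi> e a))"
proof -
  interpret cfg G h \<xi> using assms by unfold_locales
  show ?thesis using part1 part2 part3 part4 by blast
qed

end
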